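(* Let $s\geq1$ and consider an explicit $s$-stage Runge–Kutta method in Shu–Osher form with coefficients $a_{i,k}\geq0$, $b_{i,k}\geq0$ ($1\leq i\leq s$, $0\leq k\leq i-1$), $\sum_{k=0}^{i-1}a_{i,k}=1$ for each $i$. Let $\alpha>0$ and $T^{(1)}_\lambda(\beta,\Delta t)=(1-\beta\Delta t\lambda)^{-1}$. Apply the method to $dy/dt=T^{(1)}_\lambda(\alpha,\Delta t)\lambda y$: $y^{(0)}=y^n$, $y^{(i)}=\sum_{k=0}^{i-1}\left(a_{i,k}y^{(k)}+\Delta t\,b_{i,k}T^{(1)}_\lambda(\alpha,\Delta t)\lambda y^{(k)}\right)$, $y^{n+1}=y^{(s)}$. Suppose that for every pair $(i,k)$ with $b_{i,k}>0$, setting $\alpha_{i,k}=(a_{i,k}/b_{i,k})\alpha$, the explicit Euler integration of $dy/dt=T^{(1)}_\lambda(\alpha_{i,k},\Delta t)\lambda y$ is unconditionally stable, i.e. $|1+\Delta t\,T^{(1)}_\lambda(\alpha_{i,k},\Delta t)\lambda|\leq1$ for all $\Delta t>0$ and all $\lambda\in\mathbb{C}$ with $\mathrm{Re}(\lambda)\leq0$. Then the Runge–Kutta integration above is unconditionally stable: $|y^{n+1}|\leq|y^n|$ for all $\Delta t>0$, all $\lambda$ with $\mathrm{Re}(\lambda)\leq 0$ and all $y^n\in\mathbb{C}$. *)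

theory Defs
  imports "HOL-Analysis.Analysis"
begin

definition T1 :: "complex \<Rightarrow> real \<Rightarrow> real \<Rightarrow> complex" where
  "T1 lam \<beta> dt = inverse (1 - complex_of_real (\<beta> * dt) * lam)"

fun rk_stages :: "(nat \<Rightarrow> nat \<Rightarrow> real) \<Rightarrow> (nat \<Rightarrow> nat \<Rightarrow> real) \<Rightarrow> real \<Rightarrow> real \<Rightarrow> complex
    \<Rightarrow> complex \<Rightarrow> nat \<Rightarrow> complex list" where
  "rk_stages a b \<alpha> dt lam y0 0 = [y0]"
| "rk_stages a b \<alpha> dt lam y0 (Suc i) =
     (let ys = rk_stages a b \<alpha> dt lam y0 i in
      ys @ [\<Sum>k<Suc i. complex_of_real (a (Suc i) k) * ys ! k
              + complex_of_real (dt * b (Suc i) k) * T1 lam \<alpha> dt * lam * ys ! k])"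

definition rk_step :: "nat \<Rightarrow> (nat \<Rightarrow> nat \<Rightarrow> real) \<Rightarrow> (nat \<Rightarrow> nat \<Rightarrow> real) \<Rightarrow> real \<Rightarrow> real
    \<Rightarrow> complex \<Rightarrow> complex \<Rightarrow> complex" where
  "rk_step s a b \<alpha> dt lam yn = rk_stages a b \<alpha> dt lam yn s ! s"

end

theory Submission
  imports Defs
begin

lemma stage_term:
  fixes a b \<alpha> dt :: real and lam y :: complex
  assumes a0: "a \<ge> 0" and b0: "b \<ge> 0" and al: "\<alpha> > 0" and dt: "dt > 0" and lr: "Re lam \<le> 0"
    and H: "b > 0 \<Longrightarrow> (\<forall>dt::real. \<forall>lam::complex. dt > 0 \<longrightarrow> Re lam \<le> 0 \<longrightarrow>
              cmod (1 + complex_of_real dt * T1 lam ((a / b) * \<alpha>) dt * lam) \<le> 1)"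
  shows "cmod (complex_of_real a * y + complex_of_real (dt * b) * T1 lam \<alpha> dt * lam * y) \<le> a * cmod y"
proof (cases "b = 0")
  case True
  then show ?thesis using a0 by (simp add: norm_mult)
next
  case False
  then have bp: "b > 0" using b0 by simp
  note H' = H[OF bp]
  show ?thesis
  proof (cases "a = 0")
    case True
    have "cmod (1 + complex_of_real 1 * T1 (-3) ((a / b) * \<alpha>) 1 * (-3)) \<le> 1"
      using H'[rule_format, of 1 "-3"] by simp
    then have False using True by (simp add: T1_def)
    then show ?thesis ..
  next
    case False
    define c where "c = a / b"
    have cp: "c > 0" using False a0 bp by (simp add: c_def)
    have "cmod (1 + complex_of_real (dt / c) * T1 lam (c * \<alpha>) (dt / c) * lam) \<le> 1"
    proof -
      have "\<forall>dt::real. \<forall>lam::complex. dt > 0 \<longrightarrow> Re lam \<le> 0 \<longrightarrow>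
              cmod (1 + complex_of_real dt * T1 lam (c * \<alpha>) dt * lam) \<le> 1"
        using H' by (simp add: c_def)
      moreover have "dt / c > 0" using cp dt by simp
      ultimately show ?thesis using lr by blast
    qed
    moreover have "T1 lam (c * \<alpha>) (dt / c) = T1 lam \<alpha> dt"
      unfolding T1_def using cp by (simp add: field_simps)
    ultimately have le: "cmod (1 + complex_of_real (dt / c) * T1 lam \<alpha> dt * lam) \<le> 1" by simp
    have ac: "a = b * c" using bp by (simp add: c_def)
    have eq: "complex_of_real a * y + complex_of_real (dt * b) * T1 lam \<alpha> dt * lam * y
        = complex_of_real a * (1 + complex_of_real (dt / c) * T1 lam \<alpha> dt * lam) * y"
      using cp by (simp add: ac field_simps)
    have "cmod (complex_of_real a * (1 + complex_of_real (dt / c) * T1 lam \<alpha> dt * lam) * y)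
       = a * cmod (1 + complex_of_real (dt / c) * T1 lam \<alpha> dt * lam) * cmod y"
      using a0 by (simp add: norm_mult)
    also have "\<dots> \<le> a * 1 * cmod y"
      using le a0 by (intro mult_right_mono mult_left_mono) auto
    finally show ?thesis using eq by simp
  qed
qed

theorem lemma2:
  fixes s :: nat and a b :: "nat \<Rightarrow> nat \<Rightarrow> real" and \<alpha> :: real
  assumes "s \<ge> 1"
    and "\<And>i k. 1 \<le> i \<Longrightarrow> i \<le> s \<Longrightarrow> k < i \<Longrightarrow> a i k \<ge> 0"
    and "\<And>i k. 1 \<le> i \<Longrightarrow> i \<le> s \<Longrightarrow> k < i \<Longrightarrow> b i k \<ge> 0"
    and "\<And>i. 1 \<le> i \<Longrightarrow> i \<le> s \<Longrightarrow> (\<Sum>k<i. a i k) = 1"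
    and "\<alpha> > 0"
    and "\<And>i k. 1 \<le> i \<Longrightarrow> i \<le> s \<Longrightarrow> k < i \<Longrightarrow> b i k > 0 \<Longrightarrow>
           (\<forall>dt::real. \<forall>lam::complex. dt > 0 \<longrightarrow> Re lam \<le> 0 \<longrightarrow>
              cmod (1 + complex_of_real dt * T1 lam ((a i k / b i k) * \<alpha>) dt * lam) \<le> 1)"
  shows "\<forall>dt::real. \<forall>lam::complex. \<forall>yn::complex. dt > 0 \<longrightarrow> Re lam \<le> 0 \<longrightarrow>
           cmod (rk_step s a b \<alpha> dt lam yn) \<le> cmod yn"
proof (intro allI impI)
  fix dt :: real and lam yn :: complex
  assume dt: "dt > 0" and lr: "Re lam \<le> 0"
  have main: "i \<le> s \<Longrightarrow> length (rk_stages a b \<alpha> dt lam yn i) = Suc i \<and>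
      (\<forall>j\<le>i. cmod (rk_stages a b \<alpha> dt lam yn i ! j) \<le> cmod yn)" for i
  proof (induction i)
    case 0
    then show ?case by simp
  next
    case (Suc i)
    define ys where "ys = rk_stages a b \<alpha> dt lam yn i"
    have IH: "length ys = Suc i" "\<And>j. j \<le> i \<Longrightarrow> cmod (ys ! j) \<le> cmod yn"
      using Suc by (auto simp: ys_def)
    have st: "rk_stages a b \<alpha> dt lam yn (Suc i) = ys @ [\<Sum>k<Suc i. complex_of_real (a (Suc i) k) * ys ! k
              + complex_of_real (dt * b (Suc i) k) * T1 lam \<alpha> dt * lam * ys ! k]"
      by (simp add: ys_def Let_def)
    have "cmod (\<Sum>k<Suc i. complex_of_real (a (Suc i) k) * ys ! k
              + complex_of_real (dt * b (Suc i) k) * T1 lam \<alpha> dt * lam * ys ! k)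
       \<le> (\<Sum>k<Suc i. cmod (complex_of_real (a (Suc i) k) * ys ! k
              + complex_of_real (dt * b (Suc i) k) * T1 lam \<alpha> dt * lam * ys ! k))"
      by (rule norm_sum)
    also have "\<dots> \<le> (\<Sum>k<Suc i. a (Suc i) k * cmod yn)"
    proof (rule sum_mono)
      fix k assume k: "k \<in> {..<Suc i}"
      have a0: "a (Suc i) k \<ge> 0" using assms(2)[of "Suc i" k] Suc.prems k by auto
      have "cmod (complex_of_real (a (Suc i) k) * ys ! k
              + complex_of_real (dt * b (Suc i) k) * T1 lam \<alpha> dt * lam * ys ! k)
          \<le> a (Suc i) k * cmod (ys ! k)"
        apply (rule stage_term[OF _ _ assms(5) dt lr])
        using assms(2,3,6)[of "Suc i" k] Suc.prems k by auto
      also have "\<dots> \<le> a (Suc i) k * cmod yn"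
        using IH(2)[of k] k a0 by (intro mult_left_mono) auto
      finally show "cmod (complex_of_real (a (Suc i) k) * ys ! k
              + complex_of_real (dt * b (Suc i) k) * T1 lam \<alpha> dt * lam * ys ! k)
          \<le> a (Suc i) k * cmod yn" .
    qed
    also have "\<dots> = cmod yn"
      using assms(4)[of "Suc i"] Suc.prems by (simp add: sum_distrib_right[symmetric])
    finally have last: "cmod (\<Sum>k<Suc i. complex_of_real (a (Suc i) k) * ys ! k
              + complex_of_real (dt * b (Suc i) k) * T1 lam \<alpha> dt * lam * ys ! k) \<le> cmod yn" .
    show ?case
    proof
      show "length (rk_stages a b \<alpha> dt lam yn (Suc i)) = Suc (Suc i)" using st IH by simp
      show "\<forall>j\<le>Suc i. cmod (rk_stages a b \<alpha> dt lam yn (Suc i) ! j) \<le> cmod yn"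
      proof (intro allI impI)
        fix j assume j: "j \<le> Suc i"
        show "cmod (rk_stages a b \<alpha> dt lam yn (Suc i) ! j) \<le> cmod yn"
        proof (cases "j \<le> i")
          case True
          then show ?thesis using st IH by (simp add: nth_append)
        next
          case False
          then have "j = Suc i" using j by simp
          then show ?thesis using st IH last by (simp add: nth_append)
        qed
      qed
    qed
  qed
  show "cmod (rk_step s a b \<alpha> dt lam yn) \<le> cmod yn"
    using main[of s] by (simp add: rk_step_def)
qed

end
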